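(* Consider noisy group testing under reverse $Z$-channel noise with parameter $\rho\in(0,1)$, $k=\Theta(p^\theta)$ defectives with $\theta\in(0,1)$, and i.i.d. Bernoulli testing with parameter $\nu>0$. Let the COMP decoder output $\hat S$ equal to the set of items that appear in no negative test. Then $P_e\to0$ as $p\to\infty$ whenever $n\ge n_{\rm COMP}(1+\eta)$ for an arbitrarily small fixed $\eta>0$, where $$n_{\rm COMP}=\frac{1}{(1-\rho)\nu e^{-\nu}}\,k\log p.$$
   Context: Setup: $p$ items, unknown defective set $S$ uniform among size-$k$ subsets of $\{1,\dots,p\}$, $p\to\infty$. Test matrix $\mathbf X\in\{0,1\}^{n\times p}$ with i.i.d. Bernoulli$(\nu/k)$ entries ($X_{ij}=1$ iff item $j$ is in test $i$). Noiseless outcome $U_i=\bigvee_{j\in S}X_{ij}$; observed outcome $Y_i$ obtained by passing $U_i$ independently through the reverse $Z$-channel: $P(Y=1|U=0)=\rho$, $P(Y=0|U=0)=1-\rho$, $P(Y=1|U=1)=1$. A test is negative if $Y_i=0$. $P_e=\mathbb P[\hat S\ne S]$. Natural logarithms. *)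

theory Defs
  imports "HOL-Probability.Probability" "HOL-Library.Landau_Symbols"
begin

text \<open>Items are 1..p, tests are 0..<n. The test matrix is X :: nat \<times> nat \<Rightarrow> bool,
  X (i,j) = True iff item j is in test i.\<close>

definition defective_set_pmf :: "nat \<Rightarrow> nat \<Rightarrow> nat set pmf" where
  "defective_set_pmf p k = pmf_of_set {S. S \<subseteq> {1..p} \<and> card S = k}"

definition test_matrix_pmf :: "nat \<Rightarrow> nat \<Rightarrow> real \<Rightarrow> nat \<Rightarrow> (nat \<times> nat \<Rightarrow> bool) pmf" where
  "test_matrix_pmf p n \<nu> k = Pi_pmf ({..<n} \<times> {1..p}) False (\<lambda>_. bernoulli_pmf (\<nu> / real k))"

definition noiseless_outcome :: "nat set \<Rightarrow> (nat \<times> nat \<Rightarrow> bool) \<Rightarrow> nat \<Rightarrow> bool" where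
  "noiseless_outcome S X i = (\<exists>j\<in>S. X (i, j))"

definition observed_pmf :: "real \<Rightarrow> nat \<Rightarrow> (nat \<Rightarrow> bool) \<Rightarrow> (nat \<Rightarrow> bool) pmf" where
  "observed_pmf \<rho> n U = Pi_pmf {..<n} False (\<lambda>i. if U i then return_pmf True else bernoulli_pmf \<rho>)"

definition comp_decoder :: "nat \<Rightarrow> nat \<Rightarrow> (nat \<times> nat \<Rightarrow> bool) \<Rightarrow> (nat \<Rightarrow> bool) \<Rightarrow> nat set" where
  "comp_decoder p n X Y = {j \<in> {1..p}. \<forall>i<n. X (i, j) \<longrightarrow> Y i}"

definition comp_error_prob :: "real \<Rightarrow> real \<Rightarrow> nat \<Rightarrow> nat \<Rightarrow> nat \<Rightarrow> real" where
  "comp_error_prob \<rho> \<nu> p k n =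
     measure_pmf.prob
       (do { S \<leftarrow> defective_set_pmf p k;
             X \<leftarrow> test_matrix_pmf p n \<nu> k;
             Y \<leftarrow> observed_pmf \<rho> n (noiseless_outcome S X);
             return_pmf (S, X, Y) })
       {(S, X, Y). comp_decoder p n X Y \<noteq> S}"

definition n_COMP :: "real \<Rightarrow> real \<Rightarrow> nat \<Rightarrow> nat \<Rightarrow> real" where
  "n_COMP \<rho> \<nu> k p = real k * ln (real p) / ((1 - \<rho>) * \<nu> * exp (- \<nu>))"

end

theory Submission
  imports Defs
begin

lemma Pi_pmf_rows:
  fixes A :: "'a set" and B :: "'b set"
  assumes fA: "finite A" and fB: "finite B"
  shows "Pi_pmf (A \<times> B) False (\<lambda>_. d) =
         map_pmf case_prod (Pi_pmf A (\<lambda>_. False) (\<lambda>_. Pi_pmf B False (\<lambda>_. d)))"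
proof (rule pmf_eqI)
  fix g :: "'a \<times> 'b \<Rightarrow> bool"
  have inj: "inj (case_prod :: ('a \<Rightarrow> 'b \<Rightarrow> bool) \<Rightarrow> _)"
    by (rule injI) (metis curry_case_prod)
  have g: "g = case_prod (curry g)" by simp
  have "pmf (map_pmf case_prod (Pi_pmf A (\<lambda>_. False) (\<lambda>_. Pi_pmf B False (\<lambda>_. d)))) g
      = pmf (Pi_pmf A (\<lambda>_. False) (\<lambda>_. Pi_pmf B False (\<lambda>_. d))) (curry g)"
    using pmf_map_inj'[OF inj] g by metis
  also have "\<dots> = (if (\<forall>i. i \<notin> A \<longrightarrow> curry g i = (\<lambda>_. False)) then
      \<Prod>i\<in>A. (if (\<forall>j. j \<notin> B \<longrightarrow> g (i, j) = False) then \<Prod>j\<in>B. pmf d (g (i,j)) else 0) else 0)"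
    by (simp only: pmf_Pi[OF fA] pmf_Pi[OF fB] curry_conv)
  also have "\<dots> = pmf (Pi_pmf (A \<times> B) False (\<lambda>_. d)) g"
  proof (cases "\<forall>x. x \<notin> A \<times> B \<longrightarrow> g x = False")
    case True
    then have "(\<forall>i. i \<notin> A \<longrightarrow> curry g i = (\<lambda>_. False))" by (auto simp: fun_eq_iff)
    moreover have "\<And>i. i \<in> A \<Longrightarrow> (\<forall>j. j \<notin> B \<longrightarrow> g (i, j) = False)" using True by auto
    moreover have "(\<Prod>i\<in>A. \<Prod>j\<in>B. pmf d (g (i, j))) = (\<Prod>x\<in>A \<times> B. pmf d (g x))"
      by (subst prod.cartesian_product) (simp add: split_def)
    ultimately show ?thesis using True fA fB
      by (simp add: pmf_Pi)
  next
    case False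
    then obtain i j where ij: "(i,j) \<notin> A \<times> B" "g (i,j)" by auto
    have "pmf (Pi_pmf (A \<times> B) False (\<lambda>_. d)) g = 0" using False fA fB by (auto simp: pmf_Pi)
    moreover have "(if (\<forall>i. i \<notin> A \<longrightarrow> curry g i = (\<lambda>_. False)) then
      \<Prod>i\<in>A. (if (\<forall>j. j \<notin> B \<longrightarrow> g (i, j) = False) then \<Prod>j\<in>B. pmf d (g (i,j)) else 0) else 0) = 0"
    proof (cases "i \<in> A")
      case True
      then have "j \<notin> B" using ij by auto
      then show ?thesis using True ij fA by (auto intro!: prod_zero)
    next
      case False
      then show ?thesis using ij by (auto simp: fun_eq_iff)
    qed
    ultimately show ?thesis by simp
  qed
  finally show "pmf (Pi_pmf (A \<times> B) False (\<lambda>_. d)) g =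
      pmf (map_pmf case_prod (Pi_pmf A (\<lambda>_. False) (\<lambda>_. Pi_pmf B False (\<lambda>_. d)))) g" by simp
qed

lemma measure_bind_pmf_real:
  "measure_pmf.prob (bind_pmf M f) A = measure_pmf.expectation M (\<lambda>x. measure_pmf.prob (f x) A)"
proof -
  have "ennreal (measure_pmf.prob (bind_pmf M f) A) = emeasure (bind_pmf M f) A"
    by (simp add: measure_pmf.emeasure_eq_measure)
  also have "\<dots> = (\<integral>\<^sup>+x. emeasure (f x) A \<partial>M)" by simp
  also have "\<dots> = (\<integral>\<^sup>+x. ennreal (measure_pmf.prob (f x) A) \<partial>M)"
    by (simp add: measure_pmf.emeasure_eq_measure)
  also have "\<dots> = ennreal (measure_pmf.expectation M (\<lambda>x. measure_pmf.prob (f x) A))"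
    by (rule nn_integral_eq_integral)
       (auto intro!: measure_pmf.integrable_const_bound[where B=1])
  finally show ?thesis
    by (subst (asm) ennreal_inj) (auto intro!: Bochner_Integration.integral_nonneg)
qed

lemma obs_bound:
  assumes S: "S \<subseteq> {1..p}" and r0: "0 \<le> \<rho>" and r1: "\<rho> \<le> 1"
  shows "measure_pmf.prob (observed_pmf \<rho> n (noiseless_outcome S X)) {Y. comp_decoder p n X Y \<noteq> S}
   \<le> (\<Sum>j\<in>{1..p}-S. \<Prod>i<n. (if X (i,j) \<and> \<not> noiseless_outcome S X i then \<rho> else 1))"
proof -
  define U where "U = noiseless_outcome S X"
  define Ob where "Ob = observed_pmf \<rho> n U"
  define ch where "ch = (\<lambda>i. if U i then return_pmf True else bernoulli_pmf \<rho>)"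
  have Ob_def': "Ob = Pi_pmf {..<n} False ch" by (simp add: Ob_def ch_def observed_pmf_def)
  define E where "E = (\<lambda>j. Pi {..<n} (\<lambda>i. if X (i,j) then {True} else UNIV))"
  define G where "G = Pi {..<n} (\<lambda>i. if U i then {True} else (UNIV :: bool set))"
  have sub: "{Y. comp_decoder p n X Y \<noteq> S} \<subseteq> (\<Union>j\<in>{1..p}-S. E j) \<union> (- G)"
  proof
    fix Y assume "Y \<in> {Y. comp_decoder p n X Y \<noteq> S}"
    then have ne: "comp_decoder p n X Y \<noteq> S" by simp
    show "Y \<in> (\<Union>j\<in>{1..p}-S. E j) \<union> (- G)"
    proof (cases "\<exists>j. j \<in> comp_decoder p n X Y \<and> j \<notin> S")
      case True
      then obtain j where "j \<in> comp_decoder p n X Y" "j \<notin> S" by blast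
      then have "Y \<in> E j" "j \<in> {1..p}-S" by (auto simp: comp_decoder_def E_def Pi_def)
      then show ?thesis by blast
    next
      case False
      then obtain j where j: "j \<in> S" "j \<notin> comp_decoder p n X Y" using ne by blast
      then obtain i where "i < n" "X (i,j)" "\<not> Y i" using S by (auto simp: comp_decoder_def)
      moreover have "U i" using j \<open>X (i,j)\<close> by (auto simp: U_def noiseless_outcome_def)
      ultimately have "Y \<notin> G" by (auto simp: G_def Pi_def)
      then show ?thesis by blast
    qed
  qed
  have PE: "measure_pmf.prob Ob (E j) = (\<Prod>i<n. (if X (i,j) \<and> \<not> U i then \<rho> else 1))" for j
    unfolding Ob_def' E_def
    by (subst measure_Pi_pmf_Pi) (auto intro!: prod.cong simp: ch_def r0 r1 measure_pmf_single)
  have PG: "measure_pmf.prob Ob G = 1"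
    unfolding Ob_def' G_def
    by (subst measure_Pi_pmf_Pi) (auto intro!: prod.neutral simp: ch_def measure_pmf_single)
  have "measure_pmf.prob Ob {Y. comp_decoder p n X Y \<noteq> S} \<le> measure_pmf.prob Ob ((\<Union>j\<in>{1..p}-S. E j) \<union> (- G))"
    by (rule measure_pmf.finite_measure_mono[OF sub]) simp
  also have "\<dots> \<le> measure_pmf.prob Ob (\<Union>j\<in>{1..p}-S. E j) + measure_pmf.prob Ob (- G)"
    by (rule measure_subadditive) (simp_all add: measure_pmf.emeasure_eq_measure)
  also have "measure_pmf.prob Ob (- G) = 0"
    using measure_pmf.prob_compl[of G Ob] PG by (simp add: Compl_eq_Diff_UNIV)
  also have "measure_pmf.prob Ob (\<Union>j\<in>{1..p}-S. E j) \<le> (\<Sum>j\<in>{1..p}-S. measure_pmf.prob Ob (E j))"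
    by (rule measure_pmf.finite_measure_subadditive_finite) auto
  finally show ?thesis using PE unfolding U_def Ob_def by simp
qed

lemma prod_row:
  assumes S: "S \<subseteq> P" and j: "j \<in> P" "j \<notin> S" and fP: "finite P"
  shows "(\<Prod>x\<in>P. (if x = j then (a::real) else if x \<in> S then b else 1)) = a * b ^ card S"
proof -
  have "(\<Prod>x\<in>P. (if x = j then (a::real) else if x \<in> S then b else 1)) =
        (\<Prod>x\<in>P. (if x = j then a else 1) * (if x \<in> S then b else 1))"
    using j by (intro prod.cong) auto
  also have "\<dots> = (\<Prod>x\<in>P. (if x = j then a else 1)) * (\<Prod>x\<in>P. (if x \<in> S then b else 1))"
    by (rule prod.distrib)
  also have "(\<Prod>x\<in>P. (if x = j then a else 1)) = a" using j fP by (simp add: prod.delta)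
  also have "(\<Prod>x\<in>P. (if x \<in> S then b else 1)) = b ^ card S"
    using fP S by (simp add: prod.If_cases Int_absorb1 Int_def[symmetric])
  finally show ?thesis .
qed

lemma X_exp:
  assumes S: "S \<subseteq> {1..p}" and j: "j \<in> {1..p}" "j \<notin> S" and q0: "0 \<le> q" and q1: "q \<le> 1"
    and r0: "0 \<le> \<rho>"
  shows "measure_pmf.expectation (Pi_pmf ({..<n}\<times>{1..p}) False (\<lambda>_. bernoulli_pmf q))
     (\<lambda>X. \<Prod>i<n. (if X (i,j) \<and> \<not> noiseless_outcome S X i then \<rho> else 1))
     = (1 - (1-\<rho>)*(q*(1-q)^card S))^n"
proof -
  define R where "R = Pi_pmf {1..p} False (\<lambda>_. bernoulli_pmf q)"
  define h where "h = (\<lambda>r::nat\<Rightarrow>bool. if r j \<and> \<not>(\<exists>s\<in>S. r s) then \<rho> else 1)"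
  define A where "A = Pi {1..p} (\<lambda>x. if x = j then {True} else if x \<in> S then {False} else UNIV)"
  have "measure_pmf.prob R A = (\<Prod>x\<in>{1..p}. if x = j then q else if x\<in>S then 1-q else 1)"
    unfolding R_def A_def
    by (subst measure_Pi_pmf_Pi) (auto intro!: prod.cong simp: measure_pmf_single q0 q1)
  also have "\<dots> = q*(1-q)^card S" using S j by (intro prod_row) auto
  finally have PA: "measure_pmf.prob R A = q*(1-q)^card S" .
  have memA: "r \<in> A \<longleftrightarrow> r j \<and> \<not>(\<exists>s\<in>S. r s)" for r
  proof
    assume rA: "r \<in> A"
    have a: "\<And>x. x\<in>{1..p} \<Longrightarrow> r x \<in> (if x = j then {True} else if x \<in> S then {False} else UNIV)"
      using rA unfolding A_def by blast
    have "r j" using a[OF j(1)] by simp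
    moreover have "\<not> r s" if "s\<in>S" for s using a[of s] that S j by (auto split: if_splits)
    ultimately show "r j \<and> \<not>(\<exists>s\<in>S. r s)" by blast
  next
    assume "r j \<and> \<not>(\<exists>s\<in>S. r s)" then show "r \<in> A"
      unfolding A_def Pi_def by auto
  qed
  have hA: "h = (\<lambda>r. 1 - (1-\<rho>) * indicator A r)"
    by (auto simp: h_def fun_eq_iff memA indicator_def)
  have Eh: "measure_pmf.expectation R h = 1 - (1-\<rho>)*(q*(1-q)^card S)"
    unfolding hA PA[symmetric]
    by (subst Bochner_Integration.integral_diff) (auto simp: measure_pmf.emeasure_eq_measure)
  have "measure_pmf.expectation (Pi_pmf ({..<n}\<times>{1..p}) False (\<lambda>_. bernoulli_pmf q))
     (\<lambda>X. \<Prod>i<n. (if X (i,j) \<and> \<not> noiseless_outcome S X i then \<rho> else 1))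
     = measure_pmf.expectation (Pi_pmf {..<n} (\<lambda>_. False) (\<lambda>_. R)) (\<lambda>RR. \<Prod>i<n. h (RR i))"
    unfolding R_def by (subst Pi_pmf_rows) (auto simp: h_def noiseless_outcome_def)
  also have "\<dots> = (\<Prod>i<n. measure_pmf.expectation R h)"
    by (rule expectation_prod_Pi_pmf)
       (auto simp: h_def r0 intro!: measure_pmf.integrable_const_bound[where B="max 1 \<rho>"])
  also have "\<dots> = (1 - (1-\<rho>)*(q*(1-q)^card S))^n" by (simp add: Eh)
  finally show ?thesis .
qed

lemma per_S:
  assumes S: "S \<subseteq> {1..p}" and q0: "0 \<le> q" and q1: "q \<le> 1" and r0: "0 \<le> \<rho>" and r1: "\<rho> \<le> 1"
  shows "measure_pmf.prob (do {X \<leftarrow> Pi_pmf ({..<n}\<times>{1..p}) False (\<lambda>_. bernoulli_pmf q);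
             Y \<leftarrow> observed_pmf \<rho> n (noiseless_outcome S X); return_pmf (S,X,Y)})
          {(S',X,Y). comp_decoder p n X Y \<noteq> S'}
        \<le> real p * (1-(1-\<rho>)*(q*(1-q)^card S))^n"
proof -
  define M where "M = Pi_pmf ({..<n}\<times>{1..p}) False (\<lambda>_. bernoulli_pmf q)"
  define F where "F = (\<lambda>j X. \<Prod>i<n. (if X (i,j) \<and> \<not> noiseless_outcome S X i then \<rho> else (1::real)))"
  define c where "c = (1-(1-\<rho>)*(q*(1-q)^card S))"
  have F01: "0 \<le> F j X \<and> F j X \<le> 1" for j X
    unfolding F_def using r0 r1 by (auto intro!: prod_nonneg prod_le_1)
  have intF: "integrable M (F j)" for j
    using F01 by (intro measure_pmf.integrable_const_bound[where B=1]) auto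
  have c0: "0 \<le> c"
  proof -
    have "q*(1-q)^card S \<le> 1 * 1" using q0 q1 by (intro mult_mono power_le_one) auto
    moreover have "0 \<le> q*(1-q)^card S" using q0 q1 by simp
    ultimately have "(1-\<rho>)*(q*(1-q)^card S) \<le> 1" using r0 r1
      using mult_le_one[of "1-\<rho>" "q*(1-q)^card S"] by simp
    then show ?thesis by (simp add: c_def)
  qed
  have "measure_pmf.prob (do {X \<leftarrow> M; Y \<leftarrow> observed_pmf \<rho> n (noiseless_outcome S X); return_pmf (S,X,Y)})
          {(S',X,Y). comp_decoder p n X Y \<noteq> S'}
      = measure_pmf.expectation M (\<lambda>X. measure_pmf.prob (observed_pmf \<rho> n (noiseless_outcome S X))
           {Y. comp_decoder p n X Y \<noteq> S})"
    by (subst measure_bind_pmf_real) (simp add: map_pmf_def[symmetric] vimage_def)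
  also have "\<dots> \<le> measure_pmf.expectation M (\<lambda>X. \<Sum>j\<in>{1..p}-S. F j X)"
  proof (rule Bochner_Integration.integral_mono)
    show "integrable (measure_pmf M) (\<lambda>X. measure_pmf.prob (observed_pmf \<rho> n (noiseless_outcome S X))
           {Y. comp_decoder p n X Y \<noteq> S})"
      by (rule measure_pmf.integrable_const_bound[where B=1]) auto
    show "integrable (measure_pmf M) (\<lambda>X. \<Sum>j\<in>{1..p}-S. F j X)"
      by (rule Bochner_Integration.integrable_sum) (rule intF)
    fix X show "measure_pmf.prob (observed_pmf \<rho> n (noiseless_outcome S X))
           {Y. comp_decoder p n X Y \<noteq> S} \<le> (\<Sum>j\<in>{1..p}-S. F j X)"
      unfolding F_def by (rule obs_bound[OF S r0 r1])
  qed
  also have "\<dots> = (\<Sum>j\<in>{1..p}-S. measure_pmf.expectation M (F j))"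
    by (rule Bochner_Integration.integral_sum) (rule intF)
  also have "\<dots> = (\<Sum>j\<in>{1..p}-S. c^n)"
    unfolding M_def F_def c_def using S q0 q1 r0
    by (intro sum.cong refl X_exp) auto
  also have "\<dots> = real (card ({1..p}-S)) * c^n" by simp
  also have "\<dots> \<le> real p * c^n"
  proof -
    have "card ({1..p}-S) \<le> p" using card_mono[of "{1..p}" "{1..p}-S"] by auto
    then show ?thesis using c0 by (intro mult_right_mono) auto
  qed
  finally show ?thesis unfolding M_def c_def .
qed

lemma comp_bound:
  assumes kp: "k \<le> p" and q0: "0 \<le> \<nu> / real k" and q1: "\<nu> / real k \<le> 1"
    and r0: "0 \<le> \<rho>" and r1: "\<rho> \<le> 1"
  shows "comp_error_prob \<rho> \<nu> p k n \<le> real p * (1-(1-\<rho>)*((\<nu>/real k)*(1-\<nu>/real k)^k))^n"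
proof -
  define D where "D = defective_set_pmf p k"
  define C where "C = real p * (1-(1-\<rho>)*((\<nu>/real k)*(1-\<nu>/real k)^k))^n"
  have ne: "{S. S \<subseteq> {1..p} \<and> card S = k} \<noteq> {}"
    using obtain_subset_with_card_n[of k "{1..p}"] kp by auto
  have fin: "finite {S. S \<subseteq> {1..p} \<and> card S = k}" by simp
  have setD: "set_pmf D = {S. S \<subseteq> {1..p} \<and> card S = k}"
    unfolding D_def defective_set_pmf_def using ne fin by simp
  have "comp_error_prob \<rho> \<nu> p k n = measure_pmf.expectation D (\<lambda>S.
          measure_pmf.prob (do {X \<leftarrow> Pi_pmf ({..<n}\<times>{1..p}) False (\<lambda>_. bernoulli_pmf (\<nu> / real k));
             Y \<leftarrow> observed_pmf \<rho> n (noiseless_outcome S X); return_pmf (S,X,Y)})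
          {(S',X,Y). comp_decoder p n X Y \<noteq> S'})"
    unfolding comp_error_prob_def test_matrix_pmf_def D_def by (rule measure_bind_pmf_real)
  also have "\<dots> \<le> C"
  proof (rule measure_pmf.integral_le_const)
    show "integrable (measure_pmf D) (\<lambda>S.
          measure_pmf.prob (do {X \<leftarrow> Pi_pmf ({..<n}\<times>{1..p}) False (\<lambda>_. bernoulli_pmf (\<nu> / real k));
             Y \<leftarrow> observed_pmf \<rho> n (noiseless_outcome S X); return_pmf (S,X,Y)})
          {(S',X,Y). comp_decoder p n X Y \<noteq> S'})"
      by (rule measure_pmf.integrable_const_bound[where B=1]) auto
    show "AE S in measure_pmf D. measure_pmf.prob (do {X \<leftarrow> Pi_pmf ({..<n}\<times>{1..p}) False (\<lambda>_. bernoulli_pmf (\<nu> / real k));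
             Y \<leftarrow> observed_pmf \<rho> n (noiseless_outcome S X); return_pmf (S,X,Y)})
          {(S',X,Y). comp_decoder p n X Y \<noteq> S'} \<le> C"
    proof (rule AE_pmfI)
      fix S assume "S \<in> set_pmf D"
      then have S: "S \<subseteq> {1..p}" "card S = k" using setD by auto
      show "measure_pmf.prob (do {X \<leftarrow> Pi_pmf ({..<n}\<times>{1..p}) False (\<lambda>_. bernoulli_pmf (\<nu> / real k));
             Y \<leftarrow> observed_pmf \<rho> n (noiseless_outcome S X); return_pmf (S,X,Y)})
          {(S',X,Y). comp_decoder p n X Y \<noteq> S'} \<le> C"
        using per_S[OF S(1) q0 q1 r0 r1, of n] S(2) by (simp add: C_def)
    qed
  qed
  finally show ?thesis unfolding C_def .
qed

theorem lemma1:
  fixes \<rho> \<theta> \<nu> \<eta> :: real and k n :: "nat \<Rightarrow> nat"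
  assumes "0 < \<rho>" "\<rho> < 1"
    and "0 < \<theta>" "\<theta> < 1"
    and "0 < \<nu>"
    and "0 < \<eta>"
    and "(\<lambda>p. real (k p)) \<in> \<Theta>(\<lambda>p. real p powr \<theta>)"
    and "eventually (\<lambda>p. real (n p) \<ge> (1 + \<eta>) * n_COMP \<rho> \<nu> (k p) p) sequentially"
  shows "(\<lambda>p. comp_error_prob \<rho> \<nu> p (k p) (n p)) \<longlonglongrightarrow> 0"
proof -
  note r0 = assms(1) and r1 = assms(2) and t0 = assms(3) and t1 = assms(4)
    and nu = assms(5) and eta = assms(6)
  from assms(7) have kO: "(\<lambda>p. real (k p)) \<in> O(\<lambda>p. real p powr \<theta>)"
    and kW: "(\<lambda>p. real (k p)) \<in> \<Omega>(\<lambda>p. real p powr \<theta>)" by (auto simp: bigtheta_def)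
  obtain c1 where c1: "c1 > 0" "eventually (\<lambda>p. norm (real (k p)) \<le> c1 * norm (real p powr \<theta>)) sequentially"
    using landau_o.bigE[OF kO] by blast
  obtain c2 where c2: "c2 > 0" "eventually (\<lambda>p. norm (real (k p)) \<ge> c2 * norm (real p powr \<theta>)) sequentially"
    using landau_omega.bigE[OF kW] by blast
  have lim_a: "(\<lambda>p. real p powr (\<theta> - 1)) \<longlonglongrightarrow> 0"
    using t1 by (intro tendsto_neg_powr filterlim_real_sequentially) simp
  have ev_a: "eventually (\<lambda>p. real p powr (\<theta> - 1) < 1 / c1) sequentially"
    using order_tendstoD(2)[OF lim_a] c1(1) by simp
  have ev_kp: "eventually (\<lambda>p. k p \<le> p) sequentially"
    using ev_a c1(2) eventually_gt_at_top[of 0]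
  proof eventually_elim
    case (elim p)
    have pp: "real p powr \<theta> = real p powr (\<theta> - 1) * real p"
      using powr_add[of "real p" "\<theta> - 1" 1] elim(3) by simp
    have "real (k p) \<le> c1 * (real p powr (\<theta> - 1) * real p)" using elim(2) pp by simp
    also have "\<dots> \<le> c1 * (1 / c1 * real p)"
      using elim(1) c1(1) by (intro mult_left_mono mult_right_mono) auto
    also have "\<dots> = real p" using c1(1) by simp
    finally show ?case by simp
  qed
  have lim_b: "(\<lambda>p. real p powr (- \<theta>)) \<longlonglongrightarrow> 0"
    using t0 by (intro tendsto_neg_powr filterlim_real_sequentially) simp
  have top_b: "filterlim (\<lambda>p. inverse (real p powr (- \<theta>))) at_top sequentially"
    by (rule filterlim_inverse_at_top[OF lim_b]) (use eventually_gt_at_top[of 0] in \<open>eventually_elim, simp\<close>)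
  have top_c: "filterlim (\<lambda>p. c2 * real p powr \<theta>) at_top sequentially"
    using filterlim_tendsto_pos_mult_at_top[OF tendsto_const c2(1) top_b]
    by (simp add: powr_minus)
  have Ktop: "filterlim (\<lambda>p. real (k p)) at_top sequentially"
    by (rule filterlim_at_top_mono[OF top_c]) (use c2(2) in \<open>eventually_elim, simp\<close>)
  have knat: "filterlim k at_top sequentially"
    unfolding filterlim_at_top
  proof
    fix Z :: nat
    have "eventually (\<lambda>p. real Z \<le> real (k p)) sequentially"
      using Ktop[unfolded filterlim_at_top] by blast
    then show "eventually (\<lambda>p. Z \<le> k p) sequentially" by simp
  qed
  have lim1: "(\<lambda>p. (1 + - \<nu> / real (k p)) ^ (k p)) \<longlonglongrightarrow> exp (- \<nu>)"
    using filterlim_compose[OF tendsto_exp_limit_sequentially[of "-\<nu>"] knat] by simp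
  have lim2: "(\<lambda>p. (1 + \<eta>) * ((1 + - \<nu> / real (k p)) ^ (k p) * exp \<nu>)) \<longlonglongrightarrow> (1 + \<eta>) * (exp (- \<nu>) * exp \<nu>)"
    by (intro tendsto_mult tendsto_const lim1)
  have ev_g: "eventually (\<lambda>p. 1 + \<eta>/2 < (1 + \<eta>) * ((1 + - \<nu> / real (k p)) ^ (k p) * exp \<nu>)) sequentially"
    by (rule order_tendstoD(1)[OF lim2]) (use eta in \<open>simp add: exp_minus\<close>)
  have ev_K: "eventually (\<lambda>p. max 1 \<nu> \<le> real (k p)) sequentially"
    using Ktop[unfolded filterlim_at_top] by blast
  have bound: "eventually (\<lambda>p. comp_error_prob \<rho> \<nu> p (k p) (n p) \<le> real p powr (- \<eta> / 2)) sequentially"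
    using ev_kp ev_g ev_K eventually_gt_at_top[of 0] assms(8)
  proof eventually_elim
    case (elim p)
    define K where "K = k p"
    define N where "N = n p"
    define q where "q = \<nu> / real K"
    define c where "c = (1-\<rho>)*(q*(1-q)^K)"
    have K1: "real K \<ge> 1" and Knu: "\<nu> \<le> real K" using elim(3) by (auto simp: K_def)
    have q0: "0 \<le> q" and q1: "q \<le> 1" using K1 Knu nu by (auto simp: q_def)
    have c0: "0 \<le> c" using q0 q1 r1 by (simp add: c_def)
    have c1': "c \<le> 1"
    proof -
      have "q*(1-q)^K \<le> 1 * 1" using q0 q1 by (intro mult_mono power_le_one) auto
      then show ?thesis using mult_le_one[of "1-\<rho>" "q*(1-q)^K"] r0 r1 q0 q1 by (simp add: c_def)
    qed
    have lnp: "0 \<le> ln (real p)" using elim(4) by simp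
    have P: "comp_error_prob \<rho> \<nu> p K N \<le> real p * (1 - c)^N"
      using comp_bound[of K p \<nu> \<rho> N] elim(1) q0 q1 r0 r1 unfolding K_def q_def c_def by simp
    have "(1 - c)^N \<le> exp (- c)^N"
      using c1' exp_ge_add_one_self[of "-c"] by (intro power_mono) auto
    also have "\<dots> = exp (- (c * real N))" by (simp add: exp_of_nat_mult[symmetric] mult.commute)
    also have "\<dots> \<le> exp (- ((1 + \<eta>/2) * ln (real p)))"
    proof -
      have "c * ((1 + \<eta>) * n_COMP \<rho> \<nu> K p) = (1 + \<eta>) * ((1 + - \<nu> / real K) ^ K * exp \<nu>) * ln (real p)"
        using K1 nu r1 unfolding c_def q_def n_COMP_def by (simp add: field_simps exp_minus)
      also have "\<dots> \<ge> (1 + \<eta>/2) * ln (real p)"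
        using elim(2) lnp unfolding K_def by (intro mult_right_mono) auto
      finally have "(1 + \<eta>/2) * ln (real p) \<le> c * ((1 + \<eta>) * n_COMP \<rho> \<nu> K p)" .
      also have "\<dots> \<le> c * real N" using elim(5) c0 unfolding K_def N_def by (intro mult_left_mono) auto
      finally show ?thesis by simp
    qed
    finally have "comp_error_prob \<rho> \<nu> p K N \<le> real p * exp (- ((1 + \<eta>/2) * ln (real p)))"
      using P elim(4) by (meson less_imp_le mult_left_mono of_nat_0_le_iff order_trans)
    also have "\<dots> = exp (ln (real p)) * exp (- ((1 + \<eta>/2) * ln (real p)))" using elim(4) by simp
    also have "\<dots> = exp ((- \<eta> / 2) * ln (real p))" by (simp add: exp_add[symmetric] algebra_simps)
    also have "\<dots> = real p powr (- \<eta> / 2)" using elim(4) by (simp add: powr_def)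
    finally show ?case unfolding K_def N_def .
  qed
  have nonneg: "eventually (\<lambda>p. 0 \<le> comp_error_prob \<rho> \<nu> p (k p) (n p)) sequentially"
    by (simp add: comp_error_prob_def)
  have lim0: "(\<lambda>p. real p powr (- \<eta> / 2)) \<longlonglongrightarrow> 0"
    using eta by (intro tendsto_neg_powr filterlim_real_sequentially) simp
  show ?thesis
    by (rule tendsto_sandwich[OF nonneg bound tendsto_const lim0])
qed

end
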